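(* Let $N$ be a nontrivial normal subgroup of $G_2$. If $\phi(N)\simeq S_8$, then $N=G_2$.
   Context: The $2\times2\times2$ Rubik's cube consists of 8 corner cubelets, each carrying 3 colored stickers. Corner positions are numbered 1 = top-front-left, 2 = top-front-right, 3 = top-back-left, 4 = top-back-right, 5 = bottom-front-left, 6 = bottom-front-right, 7 = bottom-back-left, 8 = bottom-back-right. $G_2$ is the subgroup of the symmetric group on the 24 stickers generated by the six moves $u,d,f,b,l,r$ rotating respectively the top, bottom, front, back, left, right layer of four cubelets by $90^\circ$ clockwise as seen from outside facing that face. $\phi:G_2\to S_8$ records the permutation of corner positions. *)

theory Defs
  imports "HOL-Algebra.Sym_Groups" "HOL-Algebra.Generated_Groups"
begin

text \<open>Faces of the cube (also used as outward normal directions).\<close>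
datatype face = U | D | Fr | Bk | Lf | Rt

definition corner_faces :: "nat \<Rightarrow> face set" where
  "corner_faces c =
     (if c = 1 then {U, Fr, Lf} else if c = 2 then {U, Fr, Rt}
      else if c = 3 then {U, Bk, Lf} else if c = 4 then {U, Bk, Rt}
      else if c = 5 then {D, Fr, Lf} else if c = 6 then {D, Fr, Rt}
      else if c = 7 then {D, Bk, Lf} else if c = 8 then {D, Bk, Rt} else {})"

definition corner_of :: "face set \<Rightarrow> nat" where
  "corner_of S = (THE c. c \<in> {1..8} \<and> corner_faces c = S)"

definition stickers :: "(nat \<times> face) set" where
  "stickers = {(c, X). c \<in> {1..8} \<and> X \<in> corner_faces c}"

text \<open>Action on directions of the quarter turn of face M, clockwise as seen from
  outside facing M.\<close>
fun rot :: "face \<Rightarrow> face \<Rightarrow> face" where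
  "rot U X = (case X of Fr \<Rightarrow> Lf | Lf \<Rightarrow> Bk | Bk \<Rightarrow> Rt | Rt \<Rightarrow> Fr | _ \<Rightarrow> X)"
| "rot D X = (case X of Fr \<Rightarrow> Rt | Rt \<Rightarrow> Bk | Bk \<Rightarrow> Lf | Lf \<Rightarrow> Fr | _ \<Rightarrow> X)"
| "rot Fr X = (case X of U \<Rightarrow> Rt | Rt \<Rightarrow> D | D \<Rightarrow> Lf | Lf \<Rightarrow> U | _ \<Rightarrow> X)"
| "rot Bk X = (case X of U \<Rightarrow> Lf | Lf \<Rightarrow> D | D \<Rightarrow> Rt | Rt \<Rightarrow> U | _ \<Rightarrow> X)"
| "rot Rt X = (case X of Fr \<Rightarrow> U | U \<Rightarrow> Bk | Bk \<Rightarrow> D | D \<Rightarrow> Fr | _ \<Rightarrow> X)"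
| "rot Lf X = (case X of Fr \<Rightarrow> D | D \<Rightarrow> Bk | Bk \<Rightarrow> U | U \<Rightarrow> Fr | _ \<Rightarrow> X)"

definition move :: "face \<Rightarrow> nat \<times> face \<Rightarrow> nat \<times> face" where
  "move M s = (if s \<in> stickers \<and> M \<in> corner_faces (fst s)
               then (corner_of (rot M ` corner_faces (fst s)), rot M (snd s)) else s)"

definition sticker_sym :: "(nat \<times> face \<Rightarrow> nat \<times> face) monoid" where
  "sticker_sym = \<lparr>carrier = {p. p permutes stickers}, mult = (\<circ>), one = id\<rparr>"

definition G2_set :: "(nat \<times> face \<Rightarrow> nat \<times> face) set" where
  "G2_set = generate sticker_sym {move U, move D, move Fr, move Bk, move Lf, move Rt}"

definition G2 :: "(nat \<times> face \<Rightarrow> nat \<times> face) monoid" where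
  "G2 = sticker_sym\<lparr>carrier := G2_set\<rparr>"

definition phi :: "(nat \<times> face \<Rightarrow> nat \<times> face) \<Rightarrow> nat \<Rightarrow> nat" where
  "phi g c = (if c \<in> {1..8} then fst (g (c, if c \<le> 4 then U else D)) else c)"

end

theory Submission imports Defs begin

lemma c8_cases:
  "c \<in> {1..8} \<Longrightarrow> c = 1 \<or> c = 2 \<or> c = 3 \<or> c = 4 \<or> c = 5 \<or> c = 6 \<or> c = 7 \<or> c = (8::nat)"
  by auto

lemma stickers_eq: "stickers = {(1,U),(1,Fr),(1,Lf),(2,U),(2,Fr),(2,Rt),(3,U),(3,Bk),(3,Lf),(4,U),(4,Bk),(4,Rt),
  (5,D),(5,Fr),(5,Lf),(6,D),(6,Fr),(6,Rt),(7,D),(7,Bk),(7,Lf),(8,D),(8,Bk),(8,Rt)}"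
proof (rule equalityI; rule subsetI)
  fix x assume "x \<in> stickers"
  then obtain c X where x: "x = (c,X)" "c \<in> {1..8}" "X \<in> corner_faces c"
    unfolding stickers_def by blast
  from x(2) show "x \<in> {(1,U),(1,Fr),(1,Lf),(2,U),(2,Fr),(2,Rt),(3,U),(3,Bk),(3,Lf),(4,U),(4,Bk),(4,Rt),
  (5,D),(5,Fr),(5,Lf),(6,D),(6,Fr),(6,Rt),(7,D),(7,Bk),(7,Lf),(8,D),(8,Bk),(8,Rt)}"
    using x(3) unfolding x(1)
    by (elim c8_cases[elim_format] disjE) (auto simp: corner_faces_def)
next
  fix x :: "nat \<times> face" assume "x \<in> {(1,U),(1,Fr),(1,Lf),(2,U),(2,Fr),(2,Rt),(3,U),(3,Bk),(3,Lf),(4,U),(4,Bk),(4,Rt),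
  (5,D),(5,Fr),(5,Lf),(6,D),(6,Fr),(6,Rt),(7,D),(7,Bk),(7,Lf),(8,D),(8,Bk),(8,Rt)}"
  then show "x \<in> stickers" unfolding stickers_def by (auto simp: corner_faces_def)
qed

lemma corner_of_eq: assumes "c \<in> {1..8}" "S = corner_faces c" shows "corner_of S = c"
  unfolding corner_of_def
proof (rule the_equality)
  show "c \<in> {1..8} \<and> corner_faces c = S" using assms by simp
next
  fix d assume a: "d \<in> {1..8} \<and> corner_faces d = S"
  then have e: "corner_faces d = corner_faces c" using assms by simp
  then have "U \<in> corner_faces d \<longleftrightarrow> U \<in> corner_faces c"
     "Fr \<in> corner_faces d \<longleftrightarrow> Fr \<in> corner_faces c"
     "Lf \<in> corner_faces d \<longleftrightarrow> Lf \<in> corner_faces c" by auto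
  moreover have "d \<in> {1..8}" using a by simp
  ultimately show "d = c" using assms(1)
    apply (simp only: corner_faces_def)
    apply (drule c8_cases)+
    apply (elim disjE; simp)
    done
qed

lemma move_tab:
  assumes "(c,X) \<in> stickers" "M \<in> corner_faces c" "c' \<in> {1..8}" "rot M ` corner_faces c = corner_faces c'"
  shows "move M (c,X) = (c', rot M X)"
  using assms corner_of_eq[of c' "rot M ` corner_faces c"] by (simp add: move_def)


definition fc :: "nat \<Rightarrow> nat \<Rightarrow> face" where
  "fc c j = (if c = 1 then [U,Lf,Fr] ! j else if c = 2 then [U,Fr,Rt] ! j
     else if c = 3 then [U,Bk,Lf] ! j else if c = 4 then [U,Rt,Bk] ! j
     else if c = 5 then [D,Fr,Lf] ! j else if c = 6 then [D,Rt,Fr] ! j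
     else if c = 7 then [D,Lf,Bk] ! j else [D,Bk,Rt] ! j)"

definition w :: "nat \<times> face \<Rightarrow> nat" where
  "w s = (if snd s = fc (fst s) 0 then 0 else if snd s = fc (fst s) 1 then 1 else 2)"

lemma st_disj: "s \<in> stickers \<Longrightarrow> s = (1,U) \<or> s = (1,Fr) \<or> s = (1,Lf) \<or> s = (2,U) \<or> s = (2,Fr) \<or> s = (2,Rt) \<or> s = (3,U) \<or> s = (3,Bk) \<or> s = (3,Lf) \<or> s = (4,U) \<or> s = (4,Bk) \<or> s = (4,Rt) \<or> s = (5,D) \<or> s = (5,Fr) \<or> s = (5,Lf) \<or> s = (6,D) \<or> s = (6,Fr) \<or> s = (6,Rt) \<or> s = (7,D) \<or> s = (7,Bk) \<or> s = (7,Lf) \<or> s = (8,D) \<or> s = (8,Bk) \<or> s = (8,Rt)"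
  unfolding stickers_eq by (simp only: insert_iff empty_iff simp_thms)

lemma j3_cases: "j < (3::nat) \<Longrightarrow> j = 0 \<or> j = 1 \<or> j = 2" by auto

lemma fc_st: "c \<in> {1..8} \<Longrightarrow> j < 3 \<Longrightarrow> (c, fc c j) \<in> stickers"
  by (elim c8_cases[elim_format] disjE; drule j3_cases; elim disjE; simp add: stickers_def corner_faces_def fc_def)

lemma w_fc: "c \<in> {1..8} \<Longrightarrow> j < 3 \<Longrightarrow> w (c, fc c j) = j"
  by (elim c8_cases[elim_format] disjE; drule j3_cases; elim disjE; simp add: w_def fc_def)

lemma w_lt: "w s < 3" by (simp add: w_def)

lemma fc_w: "s \<in> stickers \<Longrightarrow> fc (fst s) (w s) = snd s"
  by (drule st_disj; elim disjE; simp add: w_def fc_def)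

lemma st_fst: "s \<in> stickers \<Longrightarrow> fst s \<in> {1..8}"
  unfolding stickers_def by auto

definition model :: "(nat \<Rightarrow> nat) \<Rightarrow> (nat \<Rightarrow> nat) \<Rightarrow> nat \<times> face \<Rightarrow> nat \<times> face" where
  "model p e s = (if s \<in> stickers then (p (fst s), fc (p (fst s)) ((e (fst s) + w s) mod 3)) else s)"

lemma model_comp:
  assumes "q permutes {1..8}"
  shows "model p e \<circ> model q f = model (p \<circ> q) (\<lambda>c. f c + e (q c))"
proof (rule ext)
  fix s
  show "(model p e \<circ> model q f) s = model (p \<circ> q) (\<lambda>c. f c + e (q c)) s"
  proof (cases "s \<in> stickers")
    case True
    let ?c = "fst s" let ?j = "(f ?c + w s) mod 3"
    have c: "?c \<in> {1..8}" using st_fst[OF True] .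
    then have qc: "q ?c \<in> {1..8}" using permutes_in_image[OF assms] by simp
    have j: "?j < 3" by simp
    have st: "(q ?c, fc (q ?c) ?j) \<in> stickers" using fc_st[OF qc j] .
    have ww: "w (q ?c, fc (q ?c) ?j) = ?j" using w_fc[OF qc j] .
    have "(e (q ?c) + ?j) mod 3 = (e (q ?c) + (f ?c + w s)) mod 3"
      by (rule mod_add_right_eq)
    also have "\<dots> = (f ?c + e (q ?c) + w s) mod 3" by (simp only: ac_simps)
    finally have m: "(e (q ?c) + ?j) mod 3 = (f ?c + e (q ?c) + w s) mod 3" .
    have 1: "model q f s = (q ?c, fc (q ?c) ?j)" using True by (simp add: model_def)
    have 2: "model p e (q ?c, fc (q ?c) ?j) = (p (q ?c), fc (p (q ?c)) ((e (q ?c) + ?j) mod 3))"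
      using st ww by (simp add: model_def)
    have 3: "model (p \<circ> q) (\<lambda>c. f c + e (q c)) s = (p (q ?c), fc (p (q ?c)) ((f ?c + e (q ?c) + w s) mod 3))"
      using True by (simp add: model_def)
    show ?thesis using 1 2 3 m by simp
  next
    case False
    then show ?thesis by (simp add: model_def)
  qed
qed

lemma model_cong:
  assumes "\<forall>c\<in>{1..8}. e c mod 3 = f c mod 3" "\<forall>c\<in>{1..8}. p c = q c"
  shows "model p e = model q f"
proof (rule ext)
  fix s
  show "model p e s = model q f s"
  proof (cases "s \<in> stickers")
    case True
    have c: "fst s \<in> {1..8}" by (rule st_fst[OF True])
    have h: "e (fst s) mod 3 = f (fst s) mod 3" using bspec[OF assms(1) c] .
    have "(e (fst s) + w s) mod 3 = (f (fst s) + w s) mod 3"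
      by (rule mod_add_cong[OF h refl])
    moreover have "p (fst s) = q (fst s)" using bspec[OF assms(2) c] .
    ultimately show ?thesis using True unfolding model_def by simp
  next
    case False
    then show ?thesis by (simp add: model_def)
  qed
qed

lemma model_id0: "model id (\<lambda>c. 0) = id"
proof (rule ext)
  fix s show "model id (\<lambda>c. 0) s = id s"
  proof (cases "s \<in> stickers")
    case True
    then show ?thesis by (simp add: model_def fc_w w_lt)
  next
    case False
    then show ?thesis by (simp add: model_def)
  qed
qed

lemma phi_model: assumes "p permutes {1..8}" shows "phi (model p e) = p"
proof (rule ext)
  fix c show "phi (model p e) c = p c"
  proof (cases "c \<in> {1..8}")
    case True
    have "(c, if c \<le> 4 then U else D) \<in> stickers"
      using True by (elim c8_cases[elim_format] disjE) (simp_all add: stickers_eq)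
    then show ?thesis using True by (simp add: phi_def model_def)
  next
    case False
    have "phi (model p e) c = c" unfolding phi_def by (rule if_not_P[OF False])
    moreover have "p c = c" using permutes_not_in[OF assms] False by blast
    ultimately show ?thesis by simp
  qed
qed

lemma phi_id: "phi id = id"
  by (rule ext) (simp add: phi_def)

definition M0 :: "(nat \<times> face \<Rightarrow> nat \<times> face) set" where
  "M0 = {g. \<exists>p e. g = model p e \<and> p permutes {1..8} \<and> (\<Sum>c\<in>{1..8}. e c) mod 3 = 0}"

lemma sum_comp_mod:
  fixes q e f :: "nat \<Rightarrow> nat"
  assumes "q permutes {1..8}" "(\<Sum>c\<in>{1..8}. e c) mod 3 = 0" "(\<Sum>c\<in>{1..8}. f c) mod 3 = (0::nat)"
  shows "(\<Sum>c\<in>{1..8}. f c + e (q c)) mod 3 = 0"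
proof -
  have "(\<Sum>c\<in>{1..8}. e (q c)) = (\<Sum>c\<in>{1..8}. e c)"
    using sum.permute[OF assms(1), of e] by (simp add: comp_def)
  then have "(\<Sum>c\<in>{1..8}. f c + e (q c)) = (\<Sum>c\<in>{1..8}. f c) + (\<Sum>c\<in>{1..8}. e c)"
    by (simp add: sum.distrib)
  then show ?thesis using assms(2,3) by (simp add: mod_add_eq[symmetric])
qed

lemma M0_comp: assumes "a \<in> M0" "b \<in> M0" shows "a \<circ> b \<in> M0"
proof -
  obtain p e where a: "a = model p e" "p permutes {1..8}" "(\<Sum>c\<in>{1..8}. e c) mod 3 = 0"
    using assms(1) unfolding M0_def by auto
  obtain q f where b: "b = model q f" "q permutes {1..8}" "(\<Sum>c\<in>{1..8}. f c) mod 3 = 0"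
    using assms(2) unfolding M0_def by auto
  have "a \<circ> b = model (p \<circ> q) (\<lambda>c. f c + e (q c))" using a b model_comp by simp
  moreover have "p \<circ> q permutes {1..8}" using a b permutes_compose by blast
  moreover have "(\<Sum>c\<in>{1..8}. f c + e (q c)) mod 3 = 0" by (rule sum_comp_mod[OF b(2) a(3) b(3)])
  ultimately show ?thesis unfolding M0_def
    by (intro CollectI exI[of _ "p \<circ> q"] exI[of _ "\<lambda>c. f c + e (q c)"]) simp
qed

lemma id_M0: "id \<in> M0"
proof -
  have "model id (\<lambda>c. 0) \<in> M0" unfolding M0_def using permutes_id
    by (intro CollectI exI[of _ id] exI[of _ "\<lambda>c. 0"]) simp
  then show ?thesis by (simp add: model_id0)
qed

lemma sum8: "(\<Sum>c\<in>{Suc 0..8}. f c) = f (Suc 0) + f 2 + f 3 + f 4 + f 5 + f 6 + f 7 + (f 8 :: nat)"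
proof -
  have "{Suc 0..8} = {Suc 0,2,3,4,5,6,7,8}" by auto
  then show ?thesis by simp
qed
lemma mt_U_1_Fr [simp]: "move U (Suc 0,Fr) = (3,Lf)"
  by (subst move_tab[where c'=3]) (auto simp: stickers_eq corner_faces_def)
lemma mt_U_1_Lf [simp]: "move U (Suc 0,Lf) = (3,Bk)"
  by (subst move_tab[where c'=3]) (auto simp: stickers_eq corner_faces_def)
lemma mt_U_1_U [simp]: "move U (Suc 0,U) = (3,U)"
  by (subst move_tab[where c'=3]) (auto simp: stickers_eq corner_faces_def)
lemma mt_U_2_Fr [simp]: "move U (2,Fr) = (1,Lf)"
  by (subst move_tab[where c'=1]) (auto simp: stickers_eq corner_faces_def)
lemma mt_U_2_Rt [simp]: "move U (2,Rt) = (1,Fr)"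
  by (subst move_tab[where c'=1]) (auto simp: stickers_eq corner_faces_def)
lemma mt_U_2_U [simp]: "move U (2,U) = (1,U)"
  by (subst move_tab[where c'=1]) (auto simp: stickers_eq corner_faces_def)
lemma mt_U_3_Bk [simp]: "move U (3,Bk) = (4,Rt)"
  by (subst move_tab[where c'=4]) (auto simp: stickers_eq corner_faces_def)
lemma mt_U_3_Lf [simp]: "move U (3,Lf) = (4,Bk)"
  by (subst move_tab[where c'=4]) (auto simp: stickers_eq corner_faces_def)
lemma mt_U_3_U [simp]: "move U (3,U) = (4,U)"
  by (subst move_tab[where c'=4]) (auto simp: stickers_eq corner_faces_def)
lemma mt_U_4_Bk [simp]: "move U (4,Bk) = (2,Rt)"
  by (subst move_tab[where c'=2]) (auto simp: stickers_eq corner_faces_def)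
lemma mt_U_4_Rt [simp]: "move U (4,Rt) = (2,Fr)"
  by (subst move_tab[where c'=2]) (auto simp: stickers_eq corner_faces_def)
lemma mt_U_4_U [simp]: "move U (4,U) = (2,U)"
  by (subst move_tab[where c'=2]) (auto simp: stickers_eq corner_faces_def)
lemma mt_U_5_D [simp]: "move U (5,D) = (5,D)"
  by (simp add: move_def corner_faces_def)
lemma mt_U_5_Fr [simp]: "move U (5,Fr) = (5,Fr)"
  by (simp add: move_def corner_faces_def)
lemma mt_U_5_Lf [simp]: "move U (5,Lf) = (5,Lf)"
  by (simp add: move_def corner_faces_def)
lemma mt_U_6_D [simp]: "move U (6,D) = (6,D)"
  by (simp add: move_def corner_faces_def)
lemma mt_U_6_Fr [simp]: "move U (6,Fr) = (6,Fr)"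
  by (simp add: move_def corner_faces_def)
lemma mt_U_6_Rt [simp]: "move U (6,Rt) = (6,Rt)"
  by (simp add: move_def corner_faces_def)
lemma mt_U_7_Bk [simp]: "move U (7,Bk) = (7,Bk)"
  by (simp add: move_def corner_faces_def)
lemma mt_U_7_D [simp]: "move U (7,D) = (7,D)"
  by (simp add: move_def corner_faces_def)
lemma mt_U_7_Lf [simp]: "move U (7,Lf) = (7,Lf)"
  by (simp add: move_def corner_faces_def)
lemma mt_U_8_Bk [simp]: "move U (8,Bk) = (8,Bk)"
  by (simp add: move_def corner_faces_def)
lemma mt_U_8_D [simp]: "move U (8,D) = (8,D)"
  by (simp add: move_def corner_faces_def)
lemma mt_U_8_Rt [simp]: "move U (8,Rt) = (8,Rt)"
  by (simp add: move_def corner_faces_def)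
lemma mt_D_1_Fr [simp]: "move D (Suc 0,Fr) = (1,Fr)"
  by (simp add: move_def corner_faces_def)
lemma mt_D_1_Lf [simp]: "move D (Suc 0,Lf) = (1,Lf)"
  by (simp add: move_def corner_faces_def)
lemma mt_D_1_U [simp]: "move D (Suc 0,U) = (1,U)"
  by (simp add: move_def corner_faces_def)
lemma mt_D_2_Fr [simp]: "move D (2,Fr) = (2,Fr)"
  by (simp add: move_def corner_faces_def)
lemma mt_D_2_Rt [simp]: "move D (2,Rt) = (2,Rt)"
  by (simp add: move_def corner_faces_def)
lemma mt_D_2_U [simp]: "move D (2,U) = (2,U)"
  by (simp add: move_def corner_faces_def)
lemma mt_D_3_Bk [simp]: "move D (3,Bk) = (3,Bk)"
  by (simp add: move_def corner_faces_def)
lemma mt_D_3_Lf [simp]: "move D (3,Lf) = (3,Lf)"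
  by (simp add: move_def corner_faces_def)
lemma mt_D_3_U [simp]: "move D (3,U) = (3,U)"
  by (simp add: move_def corner_faces_def)
lemma mt_D_4_Bk [simp]: "move D (4,Bk) = (4,Bk)"
  by (simp add: move_def corner_faces_def)
lemma mt_D_4_Rt [simp]: "move D (4,Rt) = (4,Rt)"
  by (simp add: move_def corner_faces_def)
lemma mt_D_4_U [simp]: "move D (4,U) = (4,U)"
  by (simp add: move_def corner_faces_def)
lemma mt_D_5_D [simp]: "move D (5,D) = (6,D)"
  by (subst move_tab[where c'=6]) (auto simp: stickers_eq corner_faces_def)
lemma mt_D_5_Fr [simp]: "move D (5,Fr) = (6,Rt)"
  by (subst move_tab[where c'=6]) (auto simp: stickers_eq corner_faces_def)
lemma mt_D_5_Lf [simp]: "move D (5,Lf) = (6,Fr)"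
  by (subst move_tab[where c'=6]) (auto simp: stickers_eq corner_faces_def)
lemma mt_D_6_D [simp]: "move D (6,D) = (8,D)"
  by (subst move_tab[where c'=8]) (auto simp: stickers_eq corner_faces_def)
lemma mt_D_6_Fr [simp]: "move D (6,Fr) = (8,Rt)"
  by (subst move_tab[where c'=8]) (auto simp: stickers_eq corner_faces_def)
lemma mt_D_6_Rt [simp]: "move D (6,Rt) = (8,Bk)"
  by (subst move_tab[where c'=8]) (auto simp: stickers_eq corner_faces_def)
lemma mt_D_7_Bk [simp]: "move D (7,Bk) = (5,Lf)"
  by (subst move_tab[where c'=5]) (auto simp: stickers_eq corner_faces_def)
lemma mt_D_7_D [simp]: "move D (7,D) = (5,D)"
  by (subst move_tab[where c'=5]) (auto simp: stickers_eq corner_faces_def)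
lemma mt_D_7_Lf [simp]: "move D (7,Lf) = (5,Fr)"
  by (subst move_tab[where c'=5]) (auto simp: stickers_eq corner_faces_def)
lemma mt_D_8_Bk [simp]: "move D (8,Bk) = (7,Lf)"
  by (subst move_tab[where c'=7]) (auto simp: stickers_eq corner_faces_def)
lemma mt_D_8_D [simp]: "move D (8,D) = (7,D)"
  by (subst move_tab[where c'=7]) (auto simp: stickers_eq corner_faces_def)
lemma mt_D_8_Rt [simp]: "move D (8,Rt) = (7,Bk)"
  by (subst move_tab[where c'=7]) (auto simp: stickers_eq corner_faces_def)
lemma mt_Fr_1_Fr [simp]: "move Fr (Suc 0,Fr) = (2,Fr)"
  by (subst move_tab[where c'=2]) (auto simp: stickers_eq corner_faces_def)
lemma mt_Fr_1_Lf [simp]: "move Fr (Suc 0,Lf) = (2,U)"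
  by (subst move_tab[where c'=2]) (auto simp: stickers_eq corner_faces_def)
lemma mt_Fr_1_U [simp]: "move Fr (Suc 0,U) = (2,Rt)"
  by (subst move_tab[where c'=2]) (auto simp: stickers_eq corner_faces_def)
lemma mt_Fr_2_Fr [simp]: "move Fr (2,Fr) = (6,Fr)"
  by (subst move_tab[where c'=6]) (auto simp: stickers_eq corner_faces_def)
lemma mt_Fr_2_Rt [simp]: "move Fr (2,Rt) = (6,D)"
  by (subst move_tab[where c'=6]) (auto simp: stickers_eq corner_faces_def)
lemma mt_Fr_2_U [simp]: "move Fr (2,U) = (6,Rt)"
  by (subst move_tab[where c'=6]) (auto simp: stickers_eq corner_faces_def)
lemma mt_Fr_3_Bk [simp]: "move Fr (3,Bk) = (3,Bk)"
  by (simp add: move_def corner_faces_def)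
lemma mt_Fr_3_Lf [simp]: "move Fr (3,Lf) = (3,Lf)"
  by (simp add: move_def corner_faces_def)
lemma mt_Fr_3_U [simp]: "move Fr (3,U) = (3,U)"
  by (simp add: move_def corner_faces_def)
lemma mt_Fr_4_Bk [simp]: "move Fr (4,Bk) = (4,Bk)"
  by (simp add: move_def corner_faces_def)
lemma mt_Fr_4_Rt [simp]: "move Fr (4,Rt) = (4,Rt)"
  by (simp add: move_def corner_faces_def)
lemma mt_Fr_4_U [simp]: "move Fr (4,U) = (4,U)"
  by (simp add: move_def corner_faces_def)
lemma mt_Fr_5_D [simp]: "move Fr (5,D) = (1,Lf)"
  by (subst move_tab[where c'=1]) (auto simp: stickers_eq corner_faces_def)
lemma mt_Fr_5_Fr [simp]: "move Fr (5,Fr) = (1,Fr)"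
  by (subst move_tab[where c'=1]) (auto simp: stickers_eq corner_faces_def)
lemma mt_Fr_5_Lf [simp]: "move Fr (5,Lf) = (1,U)"
  by (subst move_tab[where c'=1]) (auto simp: stickers_eq corner_faces_def)
lemma mt_Fr_6_D [simp]: "move Fr (6,D) = (5,Lf)"
  by (subst move_tab[where c'=5]) (auto simp: stickers_eq corner_faces_def)
lemma mt_Fr_6_Fr [simp]: "move Fr (6,Fr) = (5,Fr)"
  by (subst move_tab[where c'=5]) (auto simp: stickers_eq corner_faces_def)
lemma mt_Fr_6_Rt [simp]: "move Fr (6,Rt) = (5,D)"
  by (subst move_tab[where c'=5]) (auto simp: stickers_eq corner_faces_def)
lemma mt_Fr_7_Bk [simp]: "move Fr (7,Bk) = (7,Bk)"
  by (simp add: move_def corner_faces_def)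
lemma mt_Fr_7_D [simp]: "move Fr (7,D) = (7,D)"
  by (simp add: move_def corner_faces_def)
lemma mt_Fr_7_Lf [simp]: "move Fr (7,Lf) = (7,Lf)"
  by (simp add: move_def corner_faces_def)
lemma mt_Fr_8_Bk [simp]: "move Fr (8,Bk) = (8,Bk)"
  by (simp add: move_def corner_faces_def)
lemma mt_Fr_8_D [simp]: "move Fr (8,D) = (8,D)"
  by (simp add: move_def corner_faces_def)
lemma mt_Fr_8_Rt [simp]: "move Fr (8,Rt) = (8,Rt)"
  by (simp add: move_def corner_faces_def)
lemma mt_Bk_1_Fr [simp]: "move Bk (Suc 0,Fr) = (1,Fr)"
  by (simp add: move_def corner_faces_def)
lemma mt_Bk_1_Lf [simp]: "move Bk (Suc 0,Lf) = (1,Lf)"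
  by (simp add: move_def corner_faces_def)
lemma mt_Bk_1_U [simp]: "move Bk (Suc 0,U) = (1,U)"
  by (simp add: move_def corner_faces_def)
lemma mt_Bk_2_Fr [simp]: "move Bk (2,Fr) = (2,Fr)"
  by (simp add: move_def corner_faces_def)
lemma mt_Bk_2_Rt [simp]: "move Bk (2,Rt) = (2,Rt)"
  by (simp add: move_def corner_faces_def)
lemma mt_Bk_2_U [simp]: "move Bk (2,U) = (2,U)"
  by (simp add: move_def corner_faces_def)
lemma mt_Bk_3_Bk [simp]: "move Bk (3,Bk) = (7,Bk)"
  by (subst move_tab[where c'=7]) (auto simp: stickers_eq corner_faces_def)
lemma mt_Bk_3_Lf [simp]: "move Bk (3,Lf) = (7,D)"
  by (subst move_tab[where c'=7]) (auto simp: stickers_eq corner_faces_def)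
lemma mt_Bk_3_U [simp]: "move Bk (3,U) = (7,Lf)"
  by (subst move_tab[where c'=7]) (auto simp: stickers_eq corner_faces_def)
lemma mt_Bk_4_Bk [simp]: "move Bk (4,Bk) = (3,Bk)"
  by (subst move_tab[where c'=3]) (auto simp: stickers_eq corner_faces_def)
lemma mt_Bk_4_Rt [simp]: "move Bk (4,Rt) = (3,U)"
  by (subst move_tab[where c'=3]) (auto simp: stickers_eq corner_faces_def)
lemma mt_Bk_4_U [simp]: "move Bk (4,U) = (3,Lf)"
  by (subst move_tab[where c'=3]) (auto simp: stickers_eq corner_faces_def)
lemma mt_Bk_5_D [simp]: "move Bk (5,D) = (5,D)"
  by (simp add: move_def corner_faces_def)
lemma mt_Bk_5_Fr [simp]: "move Bk (5,Fr) = (5,Fr)"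
  by (simp add: move_def corner_faces_def)
lemma mt_Bk_5_Lf [simp]: "move Bk (5,Lf) = (5,Lf)"
  by (simp add: move_def corner_faces_def)
lemma mt_Bk_6_D [simp]: "move Bk (6,D) = (6,D)"
  by (simp add: move_def corner_faces_def)
lemma mt_Bk_6_Fr [simp]: "move Bk (6,Fr) = (6,Fr)"
  by (simp add: move_def corner_faces_def)
lemma mt_Bk_6_Rt [simp]: "move Bk (6,Rt) = (6,Rt)"
  by (simp add: move_def corner_faces_def)
lemma mt_Bk_7_Bk [simp]: "move Bk (7,Bk) = (8,Bk)"
  by (subst move_tab[where c'=8]) (auto simp: stickers_eq corner_faces_def)
lemma mt_Bk_7_D [simp]: "move Bk (7,D) = (8,Rt)"
  by (subst move_tab[where c'=8]) (auto simp: stickers_eq corner_faces_def)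
lemma mt_Bk_7_Lf [simp]: "move Bk (7,Lf) = (8,D)"
  by (subst move_tab[where c'=8]) (auto simp: stickers_eq corner_faces_def)
lemma mt_Bk_8_Bk [simp]: "move Bk (8,Bk) = (4,Bk)"
  by (subst move_tab[where c'=4]) (auto simp: stickers_eq corner_faces_def)
lemma mt_Bk_8_D [simp]: "move Bk (8,D) = (4,Rt)"
  by (subst move_tab[where c'=4]) (auto simp: stickers_eq corner_faces_def)
lemma mt_Bk_8_Rt [simp]: "move Bk (8,Rt) = (4,U)"
  by (subst move_tab[where c'=4]) (auto simp: stickers_eq corner_faces_def)
lemma mt_Rt_1_Fr [simp]: "move Rt (Suc 0,Fr) = (1,Fr)"
  by (simp add: move_def corner_faces_def)
lemma mt_Rt_1_Lf [simp]: "move Rt (Suc 0,Lf) = (1,Lf)"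
  by (simp add: move_def corner_faces_def)
lemma mt_Rt_1_U [simp]: "move Rt (Suc 0,U) = (1,U)"
  by (simp add: move_def corner_faces_def)
lemma mt_Rt_2_Fr [simp]: "move Rt (2,Fr) = (4,U)"
  by (subst move_tab[where c'=4]) (auto simp: stickers_eq corner_faces_def)
lemma mt_Rt_2_Rt [simp]: "move Rt (2,Rt) = (4,Rt)"
  by (subst move_tab[where c'=4]) (auto simp: stickers_eq corner_faces_def)
lemma mt_Rt_2_U [simp]: "move Rt (2,U) = (4,Bk)"
  by (subst move_tab[where c'=4]) (auto simp: stickers_eq corner_faces_def)
lemma mt_Rt_3_Bk [simp]: "move Rt (3,Bk) = (3,Bk)"
  by (simp add: move_def corner_faces_def)
lemma mt_Rt_3_Lf [simp]: "move Rt (3,Lf) = (3,Lf)"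
  by (simp add: move_def corner_faces_def)
lemma mt_Rt_3_U [simp]: "move Rt (3,U) = (3,U)"
  by (simp add: move_def corner_faces_def)
lemma mt_Rt_4_Bk [simp]: "move Rt (4,Bk) = (8,D)"
  by (subst move_tab[where c'=8]) (auto simp: stickers_eq corner_faces_def)
lemma mt_Rt_4_Rt [simp]: "move Rt (4,Rt) = (8,Rt)"
  by (subst move_tab[where c'=8]) (auto simp: stickers_eq corner_faces_def)
lemma mt_Rt_4_U [simp]: "move Rt (4,U) = (8,Bk)"
  by (subst move_tab[where c'=8]) (auto simp: stickers_eq corner_faces_def)
lemma mt_Rt_5_D [simp]: "move Rt (5,D) = (5,D)"
  by (simp add: move_def corner_faces_def)
lemma mt_Rt_5_Fr [simp]: "move Rt (5,Fr) = (5,Fr)"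
  by (simp add: move_def corner_faces_def)
lemma mt_Rt_5_Lf [simp]: "move Rt (5,Lf) = (5,Lf)"
  by (simp add: move_def corner_faces_def)
lemma mt_Rt_6_D [simp]: "move Rt (6,D) = (2,Fr)"
  by (subst move_tab[where c'=2]) (auto simp: stickers_eq corner_faces_def)
lemma mt_Rt_6_Fr [simp]: "move Rt (6,Fr) = (2,U)"
  by (subst move_tab[where c'=2]) (auto simp: stickers_eq corner_faces_def)
lemma mt_Rt_6_Rt [simp]: "move Rt (6,Rt) = (2,Rt)"
  by (subst move_tab[where c'=2]) (auto simp: stickers_eq corner_faces_def)
lemma mt_Rt_7_Bk [simp]: "move Rt (7,Bk) = (7,Bk)"
  by (simp add: move_def corner_faces_def)
lemma mt_Rt_7_D [simp]: "move Rt (7,D) = (7,D)"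
  by (simp add: move_def corner_faces_def)
lemma mt_Rt_7_Lf [simp]: "move Rt (7,Lf) = (7,Lf)"
  by (simp add: move_def corner_faces_def)
lemma mt_Rt_8_Bk [simp]: "move Rt (8,Bk) = (6,D)"
  by (subst move_tab[where c'=6]) (auto simp: stickers_eq corner_faces_def)
lemma mt_Rt_8_D [simp]: "move Rt (8,D) = (6,Fr)"
  by (subst move_tab[where c'=6]) (auto simp: stickers_eq corner_faces_def)
lemma mt_Rt_8_Rt [simp]: "move Rt (8,Rt) = (6,Rt)"
  by (subst move_tab[where c'=6]) (auto simp: stickers_eq corner_faces_def)
lemma mt_Lf_1_Fr [simp]: "move Lf (Suc 0,Fr) = (5,D)"
  by (subst move_tab[where c'=5]) (auto simp: stickers_eq corner_faces_def)
lemma mt_Lf_1_Lf [simp]: "move Lf (Suc 0,Lf) = (5,Lf)"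
  by (subst move_tab[where c'=5]) (auto simp: stickers_eq corner_faces_def)
lemma mt_Lf_1_U [simp]: "move Lf (Suc 0,U) = (5,Fr)"
  by (subst move_tab[where c'=5]) (auto simp: stickers_eq corner_faces_def)
lemma mt_Lf_2_Fr [simp]: "move Lf (2,Fr) = (2,Fr)"
  by (simp add: move_def corner_faces_def)
lemma mt_Lf_2_Rt [simp]: "move Lf (2,Rt) = (2,Rt)"
  by (simp add: move_def corner_faces_def)
lemma mt_Lf_2_U [simp]: "move Lf (2,U) = (2,U)"
  by (simp add: move_def corner_faces_def)
lemma mt_Lf_3_Bk [simp]: "move Lf (3,Bk) = (1,U)"
  by (subst move_tab[where c'=1]) (auto simp: stickers_eq corner_faces_def)
lemma mt_Lf_3_Lf [simp]: "move Lf (3,Lf) = (1,Lf)"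
  by (subst move_tab[where c'=1]) (auto simp: stickers_eq corner_faces_def)
lemma mt_Lf_3_U [simp]: "move Lf (3,U) = (1,Fr)"
  by (subst move_tab[where c'=1]) (auto simp: stickers_eq corner_faces_def)
lemma mt_Lf_4_Bk [simp]: "move Lf (4,Bk) = (4,Bk)"
  by (simp add: move_def corner_faces_def)
lemma mt_Lf_4_Rt [simp]: "move Lf (4,Rt) = (4,Rt)"
  by (simp add: move_def corner_faces_def)
lemma mt_Lf_4_U [simp]: "move Lf (4,U) = (4,U)"
  by (simp add: move_def corner_faces_def)
lemma mt_Lf_5_D [simp]: "move Lf (5,D) = (7,Bk)"
  by (subst move_tab[where c'=7]) (auto simp: stickers_eq corner_faces_def)
lemma mt_Lf_5_Fr [simp]: "move Lf (5,Fr) = (7,D)"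
  by (subst move_tab[where c'=7]) (auto simp: stickers_eq corner_faces_def)
lemma mt_Lf_5_Lf [simp]: "move Lf (5,Lf) = (7,Lf)"
  by (subst move_tab[where c'=7]) (auto simp: stickers_eq corner_faces_def)
lemma mt_Lf_6_D [simp]: "move Lf (6,D) = (6,D)"
  by (simp add: move_def corner_faces_def)
lemma mt_Lf_6_Fr [simp]: "move Lf (6,Fr) = (6,Fr)"
  by (simp add: move_def corner_faces_def)
lemma mt_Lf_6_Rt [simp]: "move Lf (6,Rt) = (6,Rt)"
  by (simp add: move_def corner_faces_def)
lemma mt_Lf_7_Bk [simp]: "move Lf (7,Bk) = (3,U)"
  by (subst move_tab[where c'=3]) (auto simp: stickers_eq corner_faces_def)
lemma mt_Lf_7_D [simp]: "move Lf (7,D) = (3,Bk)"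
  by (subst move_tab[where c'=3]) (auto simp: stickers_eq corner_faces_def)
lemma mt_Lf_7_Lf [simp]: "move Lf (7,Lf) = (3,Lf)"
  by (subst move_tab[where c'=3]) (auto simp: stickers_eq corner_faces_def)
lemma mt_Lf_8_Bk [simp]: "move Lf (8,Bk) = (8,Bk)"
  by (simp add: move_def corner_faces_def)
lemma mt_Lf_8_D [simp]: "move Lf (8,D) = (8,D)"
  by (simp add: move_def corner_faces_def)
lemma mt_Lf_8_Rt [simp]: "move Lf (8,Rt) = (8,Rt)"
  by (simp add: move_def corner_faces_def)

definition pM_U :: "nat \<Rightarrow> nat" where "pM_U = transpose 1 3 \<circ> transpose 3 4 \<circ> transpose 4 2"
definition eM_U :: "nat \<Rightarrow> nat" where "eM_U = (\<lambda>c::nat. 0::nat)"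

lemma pM_U_perm: "pM_U permutes {1..8}"
  unfolding pM_U_def by (intro permutes_compose permutes_swap_id) auto

lemma eM_U_sum: "(\<Sum>c\<in>{1..8}. eM_U c) mod 3 = 0"
  by (simp add: eM_U_def sum8)

lemma move_U_model: "move U = model pM_U eM_U"
proof (rule ext)
  fix s show "move U s = model pM_U eM_U s"
  proof (cases "s \<in> stickers")
    case True
    then show ?thesis
      by (drule_tac st_disj; elim disjE; simp add: model_def pM_U_def eM_U_def stickers_eq w_def fc_def transpose_def)
  next
    case False
    then show ?thesis by (simp add: model_def move_def)
  qed
qed

lemma move_U_4: "move U (move U (move U (move U s))) = s"
proof (cases "s \<in> stickers")
  case True
  then show ?thesis by (drule_tac st_disj; elim disjE; simp)
next
  case False
  then show ?thesis by (simp add: move_def)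
qed

definition pM_D :: "nat \<Rightarrow> nat" where "pM_D = transpose 5 6 \<circ> transpose 6 8 \<circ> transpose 8 7"
definition eM_D :: "nat \<Rightarrow> nat" where "eM_D = (\<lambda>c::nat. 0::nat)"

lemma pM_D_perm: "pM_D permutes {1..8}"
  unfolding pM_D_def by (intro permutes_compose permutes_swap_id) auto

lemma eM_D_sum: "(\<Sum>c\<in>{1..8}. eM_D c) mod 3 = 0"
  by (simp add: eM_D_def sum8)

lemma move_D_model: "move D = model pM_D eM_D"
proof (rule ext)
  fix s show "move D s = model pM_D eM_D s"
  proof (cases "s \<in> stickers")
    case True
    then show ?thesis
      by (drule_tac st_disj; elim disjE; simp add: model_def pM_D_def eM_D_def stickers_eq w_def fc_def transpose_def)
  next
    case False
    then show ?thesis by (simp add: model_def move_def)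
  qed
qed

lemma move_D_4: "move D (move D (move D (move D s))) = s"
proof (cases "s \<in> stickers")
  case True
  then show ?thesis by (drule_tac st_disj; elim disjE; simp)
next
  case False
  then show ?thesis by (simp add: move_def)
qed

definition pM_Fr :: "nat \<Rightarrow> nat" where "pM_Fr = transpose 1 2 \<circ> transpose 2 6 \<circ> transpose 6 5"
definition eM_Fr :: "nat \<Rightarrow> nat" where "eM_Fr = (\<lambda>c::nat. if c = 1 then 2 else if c = 2 then 1 else if c = 5 then 1 else if c = 6 then 2 else 0)"

lemma pM_Fr_perm: "pM_Fr permutes {1..8}"
  unfolding pM_Fr_def by (intro permutes_compose permutes_swap_id) auto

lemma eM_Fr_sum: "(\<Sum>c\<in>{1..8}. eM_Fr c) mod 3 = 0"
  by (simp add: eM_Fr_def sum8)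

lemma move_Fr_model: "move Fr = model pM_Fr eM_Fr"
proof (rule ext)
  fix s show "move Fr s = model pM_Fr eM_Fr s"
  proof (cases "s \<in> stickers")
    case True
    then show ?thesis
      by (drule_tac st_disj; elim disjE; simp add: model_def pM_Fr_def eM_Fr_def stickers_eq w_def fc_def transpose_def)
  next
    case False
    then show ?thesis by (simp add: model_def move_def)
  qed
qed

lemma move_Fr_4: "move Fr (move Fr (move Fr (move Fr s))) = s"
proof (cases "s \<in> stickers")
  case True
  then show ?thesis by (drule_tac st_disj; elim disjE; simp)
next
  case False
  then show ?thesis by (simp add: move_def)
qed

definition pM_Bk :: "nat \<Rightarrow> nat" where "pM_Bk = transpose 3 7 \<circ> transpose 7 8 \<circ> transpose 8 4"
definition eM_Bk :: "nat \<Rightarrow> nat" where "eM_Bk = (\<lambda>c::nat. if c = 3 then 1 else if c = 4 then 2 else if c = 7 then 2 else if c = 8 then 1 else 0)"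

lemma pM_Bk_perm: "pM_Bk permutes {1..8}"
  unfolding pM_Bk_def by (intro permutes_compose permutes_swap_id) auto

lemma eM_Bk_sum: "(\<Sum>c\<in>{1..8}. eM_Bk c) mod 3 = 0"
  by (simp add: eM_Bk_def sum8)

lemma move_Bk_model: "move Bk = model pM_Bk eM_Bk"
proof (rule ext)
  fix s show "move Bk s = model pM_Bk eM_Bk s"
  proof (cases "s \<in> stickers")
    case True
    then show ?thesis
      by (drule_tac st_disj; elim disjE; simp add: model_def pM_Bk_def eM_Bk_def stickers_eq w_def fc_def transpose_def)
  next
    case False
    then show ?thesis by (simp add: model_def move_def)
  qed
qed

lemma move_Bk_4: "move Bk (move Bk (move Bk (move Bk s))) = s"
proof (cases "s \<in> stickers")
  case True
  then show ?thesis by (drule_tac st_disj; elim disjE; simp)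
next
  case False
  then show ?thesis by (simp add: move_def)
qed

definition pM_Rt :: "nat \<Rightarrow> nat" where "pM_Rt = transpose 2 4 \<circ> transpose 4 8 \<circ> transpose 8 6"
definition eM_Rt :: "nat \<Rightarrow> nat" where "eM_Rt = (\<lambda>c::nat. if c = 2 then 2 else if c = 4 then 1 else if c = 6 then 1 else if c = 8 then 2 else 0)"

lemma pM_Rt_perm: "pM_Rt permutes {1..8}"
  unfolding pM_Rt_def by (intro permutes_compose permutes_swap_id) auto

lemma eM_Rt_sum: "(\<Sum>c\<in>{1..8}. eM_Rt c) mod 3 = 0"
  by (simp add: eM_Rt_def sum8)

lemma move_Rt_model: "move Rt = model pM_Rt eM_Rt"
proof (rule ext)
  fix s show "move Rt s = model pM_Rt eM_Rt s"
  proof (cases "s \<in> stickers")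
    case True
    then show ?thesis
      by (drule_tac st_disj; elim disjE; simp add: model_def pM_Rt_def eM_Rt_def stickers_eq w_def fc_def transpose_def)
  next
    case False
    then show ?thesis by (simp add: model_def move_def)
  qed
qed

lemma move_Rt_4: "move Rt (move Rt (move Rt (move Rt s))) = s"
proof (cases "s \<in> stickers")
  case True
  then show ?thesis by (drule_tac st_disj; elim disjE; simp)
next
  case False
  then show ?thesis by (simp add: move_def)
qed

definition pM_Lf :: "nat \<Rightarrow> nat" where "pM_Lf = transpose 1 5 \<circ> transpose 5 7 \<circ> transpose 7 3"
definition eM_Lf :: "nat \<Rightarrow> nat" where "eM_Lf = (\<lambda>c::nat. if c = 1 then 1 else if c = 3 then 2 else if c = 5 then 2 else if c = 7 then 1 else 0)"

lemma pM_Lf_perm: "pM_Lf permutes {1..8}"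
  unfolding pM_Lf_def by (intro permutes_compose permutes_swap_id) auto

lemma eM_Lf_sum: "(\<Sum>c\<in>{1..8}. eM_Lf c) mod 3 = 0"
  by (simp add: eM_Lf_def sum8)

lemma move_Lf_model: "move Lf = model pM_Lf eM_Lf"
proof (rule ext)
  fix s show "move Lf s = model pM_Lf eM_Lf s"
  proof (cases "s \<in> stickers")
    case True
    then show ?thesis
      by (drule_tac st_disj; elim disjE; simp add: model_def pM_Lf_def eM_Lf_def stickers_eq w_def fc_def transpose_def)
  next
    case False
    then show ?thesis by (simp add: model_def move_def)
  qed
qed

lemma move_Lf_4: "move Lf (move Lf (move Lf (move Lf s))) = s"
proof (cases "s \<in> stickers")
  case True
  then show ?thesis by (drule_tac st_disj; elim disjE; simp)
next
  case False
  then show ?thesis by (simp add: move_def)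
qed

lemma perm4:
  assumes "\<forall>x. x \<notin> S \<longrightarrow> m x = x" "\<forall>x. m (m (m (m x))) = x"
  shows "m permutes S"
  unfolding permutes_def
proof (intro conjI allI)
  show "\<And>x. x \<notin> S \<longrightarrow> m x = x" using assms(1) by blast
  fix y
  show "\<exists>!x. m x = y"
  proof (rule ex1I[of _ "m (m (m y))"])
    show "m (m (m (m y))) = y" using assms(2) by blast
  next
    fix x assume "m x = y"
    then show "x = m (m (m y))" using assms(2) by metis
  qed
qed

lemma move4: "move M (move M (move M (move M s))) = s"
  by (cases M) (simp_all only: move_U_4 move_D_4 move_Fr_4 move_Bk_4 move_Lf_4 move_Rt_4)

lemma move_perm: "move M permutes stickers"
proof (rule perm4)
  show "\<forall>x. x \<notin> stickers \<longrightarrow> move M x = x" by (simp add: move_def)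
  show "\<forall>x. move M (move M (move M (move M x))) = x" using move4 by blast
qed

lemma inv_move: "inv\<^bsub>sticker_sym\<^esub> (move M) = move M \<circ> move M \<circ> move M"
proof -
  let ?m = "move M" let ?m3 = "move M \<circ> move M \<circ> move M"
  have p3: "?m3 permutes stickers" using move_perm by (intro permutes_compose)
  have e1: "?m \<circ> ?m3 = id" by (rule ext) (simp add: move4)
  have e2: "?m3 \<circ> ?m = id" by (rule ext) (simp add: move4)
  show ?thesis unfolding m_inv_def sticker_sym_def
  proof (simp, rule the_equality)
    show "?m3 permutes stickers \<and> ?m \<circ> ?m3 = id \<and> ?m3 \<circ> ?m = id" using p3 e1 e2 by simp
  next
    fix y assume "y permutes stickers \<and> ?m \<circ> y = id \<and> y \<circ> ?m = id"
    then have "?m \<circ> y = id" by simp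
    then have "?m3 \<circ> (?m \<circ> y) = ?m3" by simp
    then show "y = ?m3" using e2 by (simp add: o_assoc)
  qed
qed

lemma M0I: "p permutes {1..8} \<Longrightarrow> (\<Sum>c\<in>{1..8}. e c) mod 3 = 0 \<Longrightarrow> model p e \<in> M0"
  unfolding M0_def by (rule CollectI, rule exI[of _ p], rule exI[of _ e]) simp

lemma move_U_M0: "move U \<in> M0"
  unfolding move_U_model by (rule M0I[OF pM_U_perm eM_U_sum])

lemma move_D_M0: "move D \<in> M0"
  unfolding move_D_model by (rule M0I[OF pM_D_perm eM_D_sum])

lemma move_Fr_M0: "move Fr \<in> M0"
  unfolding move_Fr_model by (rule M0I[OF pM_Fr_perm eM_Fr_sum])

lemma move_Bk_M0: "move Bk \<in> M0"
  unfolding move_Bk_model by (rule M0I[OF pM_Bk_perm eM_Bk_sum])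

lemma move_Lf_M0: "move Lf \<in> M0"
  unfolding move_Lf_model by (rule M0I[OF pM_Lf_perm eM_Lf_sum])

lemma move_Rt_M0: "move Rt \<in> M0"
  unfolding move_Rt_model by (rule M0I[OF pM_Rt_perm eM_Rt_sum])

lemma move_M0: "move M \<in> M0"
  by (cases M) (simp_all only: move_U_M0 move_D_M0 move_Fr_M0 move_Bk_M0 move_Lf_M0 move_Rt_M0)

lemma G2_M0: "x \<in> G2_set \<Longrightarrow> x \<in> M0"
  unfolding G2_set_def
proof (induction rule: generate.induct)
  case one
  then show ?case using id_M0 by (simp add: sticker_sym_def id_def)
next
  case (incl h)
  then show ?case using move_M0 by blast
next
  case (inv h)
  then obtain M where hM: "h = move M" by blast
  show ?case unfolding hM inv_move by (intro M0_comp move_M0)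
next
  case (eng h1 h2)
  have "h1 \<circ> h2 \<in> M0" by (rule M0_comp[OF eng.IH(1) eng.IH(2)])
  then show ?case by (simp add: sticker_sym_def comp_def)
qed

lemma move_G2: "move M \<in> G2_set"
  unfolding G2_set_def by (rule generate.incl) (cases M; simp)

lemma G2_comp: "a \<in> G2_set \<Longrightarrow> b \<in> G2_set \<Longrightarrow> a \<circ> b \<in> G2_set"
  unfolding G2_set_def using generate.eng[of a sticker_sym _ b] by (simp add: sticker_sym_def)

definition v0 :: "nat \<Rightarrow> nat" where "v0 c = (if c = 1 then 1 else if c = 8 then 2 else 0)"

lemma t0_seq: "model id v0 = move U \<circ> move U \<circ> move Fr \<circ> move Rt \<circ> (move Fr \<circ> move Fr \<circ> move Fr)
   \<circ> move U \<circ> (move Fr \<circ> move Fr \<circ> move Fr) \<circ> move U \<circ> (move Rt \<circ> move Rt \<circ> move Rt)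
   \<circ> (move Fr \<circ> move Fr \<circ> move Fr) \<circ> move Rt \<circ> move Rt"
proof (rule ext)
  fix s show "model id v0 s = (move U \<circ> move U \<circ> move Fr \<circ> move Rt \<circ> (move Fr \<circ> move Fr \<circ> move Fr)
   \<circ> move U \<circ> (move Fr \<circ> move Fr \<circ> move Fr) \<circ> move U \<circ> (move Rt \<circ> move Rt \<circ> move Rt)
   \<circ> (move Fr \<circ> move Fr \<circ> move Fr) \<circ> move Rt \<circ> move Rt) s"
  proof (cases "s \<in> stickers")
    case True
    then show ?thesis
      by (drule_tac st_disj; elim disjE; simp add: model_def v0_def stickers_eq w_def fc_def)
  next
    case False
    then show ?thesis by (simp add: model_def move_def)
  qed
qed

lemma t0_G2: "model id v0 \<in> G2_set"
  unfolding t0_seq by (intro G2_comp move_G2)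

lemma model_comp_id: "model id a \<circ> model id b = model id (\<lambda>c. b c + a c)"
  using model_comp[OF permutes_id, of id a b] by simp

lemma M0E: assumes "g \<in> M0"
  obtains p e where "g = model p e" "p permutes {1..8}" "(\<Sum>c\<in>{1..8}. e c) mod 3 = 0"
  using assms unfolding M0_def by auto

lemma mod3_aux: "(a + b) mod 3 = (0::nat) \<Longrightarrow> (2 * a) mod 3 = b mod 3"
  by presburger

theorem proposition2p8:
  assumes "N \<lhd> G2"
    and "N \<noteq> {\<one>\<^bsub>G2\<^esub>}"
    and "(sym_group 8)\<lparr>carrier := phi ` N\<rparr> \<cong> sym_group 8"
  shows "N = carrier G2"
proof -
  have sg: "subgroup N G2" using normal_imp_subgroup[OF assms(1)] .
  have grp: "group G2" using assms(1) by (simp add: normal_def)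
  have cG: "carrier G2 = G2_set" by (simp add: G2_def sticker_sym_def)
  have mG: "\<And>a b. a \<otimes>\<^bsub>G2\<^esub> b = a \<circ> b" by (simp add: G2_def sticker_sym_def)
  have oneG: "\<one>\<^bsub>G2\<^esub> = id" by (simp add: G2_def sticker_sym_def)
  have NG: "N \<subseteq> G2_set" using subgroup.subset[OF sg] cG by simp
  have Ncomp: "\<And>a b. a \<in> N \<Longrightarrow> b \<in> N \<Longrightarrow> a \<circ> b \<in> N"
  proof -
    fix a b assume "a \<in> N" "b \<in> N"
    from subgroup.m_closed[OF sg this] show "a \<circ> b \<in> N" by (simp only: mG)
  qed
  have Nid: "id \<in> N" using subgroup.one_closed[OF sg] oneG by simp
  have invG: "\<And>n. n \<in> G2_set \<Longrightarrow> inv\<^bsub>G2\<^esub> n \<in> G2_set \<and> n \<circ> inv\<^bsub>G2\<^esub> n = id \<and> inv\<^bsub>G2\<^esub> n \<circ> n = id"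
  proof -
    fix n assume "n \<in> G2_set"
    then have n: "n \<in> carrier G2" using cG by simp
    show "inv\<^bsub>G2\<^esub> n \<in> G2_set \<and> n \<circ> inv\<^bsub>G2\<^esub> n = id \<and> inv\<^bsub>G2\<^esub> n \<circ> n = id"
      using group.inv_closed[OF grp n] group.r_inv[OF grp n] group.l_inv[OF grp n]
      by (simp only: mG oneG cG)
  qed
  have Ninv: "\<And>n. n \<in> N \<Longrightarrow> inv\<^bsub>G2\<^esub> n \<in> N" by (rule subgroup.m_inv_closed[OF sg])
  have Nnorm: "\<And>x h. x \<in> G2_set \<Longrightarrow> h \<in> N \<Longrightarrow> x \<circ> h \<circ> inv\<^bsub>G2\<^esub> x \<in> N"
  proof -
    fix x h assume "x \<in> G2_set" "h \<in> N"
    then have "x \<in> carrier G2" using cG by simp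
    from normal.inv_op_closed2[OF assms(1) this \<open>h \<in> N\<close>]
    show "x \<circ> h \<circ> inv\<^bsub>G2\<^esub> x \<in> N" by (simp only: mG)
  qed

  have phiN: "phi ` N = {p. p permutes {1..8}}"
  proof (rule card_subset_eq)
    show "finite {p. p permutes {1..8::nat}}" by (rule finite_permutations) simp
    show "phi ` N \<subseteq> {p. p permutes {1..8}}"
    proof
      fix x assume "x \<in> phi ` N"
      then obtain n where n: "n \<in> N" "x = phi n" by blast
      then have "n \<in> M0" using NG G2_M0 by blast
      then obtain p e where "n = model p e" "p permutes {1..8}" by (rule M0E)
      then show "x \<in> {p. p permutes {1..8}}" using n phi_model by simp
    qed
    obtain h where "h \<in> iso ((sym_group 8)\<lparr>carrier := phi ` N\<rparr>) (sym_group 8)"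
      using assms(3) unfolding is_iso_def by blast
    then have "bij_betw h (phi ` N) {p. p permutes {1..8}}"
      unfolding iso_def by (simp add: sym_group_def)
    then show "card (phi ` N) = card {p. p permutes {1..8::nat}}" by (rule bij_betw_same_card)
  qed

  have comm: "\<And>n v. n \<in> N \<Longrightarrow> model id v \<in> G2_set \<Longrightarrow>
      model id (\<lambda>c. 2 * v c + v (inv_into UNIV (phi n) c)) \<in> N"
  proof -
    fix n v assume nN: "n \<in> N" and kG: "model id v \<in> G2_set"
    have nG: "n \<in> G2_set" using nN NG by blast
    obtain s e where ns: "n = model s e" "s permutes {1..8}" using G2_M0[OF nG] by (rule M0E)
    have ph: "phi n = s" using ns phi_model by simp
    let ?k = "model id v" let ?k' = "model id (\<lambda>c. v (inv_into UNIV s c))"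
    have "?k' \<circ> n = model s (\<lambda>c. e c + v (inv_into UNIV s (s c)))"
      using model_comp[OF ns(2), of id "\<lambda>c. v (inv_into UNIV s c)" e] ns(1) by simp
    also have "\<dots> = model s (\<lambda>c. v c + e c)"
      using permutes_inverses(2)[OF ns(2)] by (simp add: add.commute)
    also have "\<dots> = n \<circ> ?k"
      using model_comp[OF permutes_id, of s e v] ns(1) by simp
    finally have eq: "?k' \<circ> n = n \<circ> ?k" .
    have k'eq: "?k' = n \<circ> ?k \<circ> inv\<^bsub>G2\<^esub> n"
    proof -
      have "?k' = ?k' \<circ> (n \<circ> inv\<^bsub>G2\<^esub> n)" using invG[OF nG] by simp
      also have "\<dots> = (?k' \<circ> n) \<circ> inv\<^bsub>G2\<^esub> n" by (simp add: o_assoc)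
      finally show ?thesis using eq by simp
    qed
    have k2: "?k \<circ> model id (\<lambda>c. 2 * v c) = id"
    proof -
      have "?k \<circ> model id (\<lambda>c. 2 * v c) = model id (\<lambda>c. 2 * v c + v c)" by (rule model_comp_id)
      also have "\<dots> = model id (\<lambda>c. 0)" by (rule model_cong) auto
      finally show ?thesis using model_id0 by simp
    qed
    have invk: "inv\<^bsub>G2\<^esub> ?k = model id (\<lambda>c. 2 * v c)"
    proof -
      have "inv\<^bsub>G2\<^esub> ?k = inv\<^bsub>G2\<^esub> ?k \<circ> (?k \<circ> model id (\<lambda>c. 2 * v c))" using k2 by simp
      also have "\<dots> = (inv\<^bsub>G2\<^esub> ?k \<circ> ?k) \<circ> model id (\<lambda>c. 2 * v c)" by (simp add: o_assoc)
      also have "\<dots> = model id (\<lambda>c. 2 * v c)" using invG[OF kG] by simp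
      finally show ?thesis .
    qed
    have "n \<circ> (?k \<circ> inv\<^bsub>G2\<^esub> n \<circ> inv\<^bsub>G2\<^esub> ?k) \<in> N"
      using Ncomp[OF nN Nnorm[OF kG Ninv[OF nN]]] .
    moreover have "n \<circ> (?k \<circ> inv\<^bsub>G2\<^esub> n \<circ> inv\<^bsub>G2\<^esub> ?k) = ?k' \<circ> inv\<^bsub>G2\<^esub> ?k"
      using k'eq by (simp add: o_assoc)
    moreover have "?k' \<circ> inv\<^bsub>G2\<^esub> ?k = model id (\<lambda>c. 2 * v c + v (inv_into UNIV s c))"
      using invk model_comp_id by simp
    ultimately show "model id (\<lambda>c. 2 * v c + v (inv_into UNIV (phi n) c)) \<in> N" using ph by simp
  qed

  have trN: "\<And>a b. a \<in> {1..8} \<Longrightarrow> b \<in> {1..8} \<Longrightarrow> \<exists>n\<in>N. phi n = transpose a b"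
  proof -
    fix a b :: nat assume ab: "a \<in> {1..8}" "b \<in> {1..8}"
    have "transpose a b permutes {1..8}" by (rule permutes_swap_id[OF ab])
    then have "transpose a b \<in> phi ` N" using phiN by simp
    then obtain n where "n \<in> N" "transpose a b = phi n" by (rule imageE)
    then show "\<exists>n\<in>N. phi n = transpose a b" by (intro bexI[of _ n]) simp_all
  qed

  define tv where "tv x = model id (\<lambda>c. if c = x then 1 else if c = 8 then 2 else 0)" for x :: nat
  have A1: "\<And>x. x \<in> {2..7} \<Longrightarrow> tv x \<in> N"
  proof -
    fix x :: nat assume x: "x \<in> {2..7}"
    obtain n where n: "n \<in> N" "phi n = transpose 8 x" using trN[of 8 x] x by auto
    let ?f = "\<lambda>c. 2 * v0 c + v0 (transpose 8 x c)"
    have AN: "model id ?f \<in> N" using comm[OF n(1) t0_G2] unfolding n(2) inv_transpose_eq .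
    have "model id ?f \<circ> model id ?f \<in> N" by (rule Ncomp[OF AN AN])
    moreover have "model id ?f \<circ> model id ?f = tv x"
      unfolding model_comp_id tv_def
      by (rule model_cong) (use x in \<open>auto simp: v0_def transpose_def\<close>)
    ultimately show "tv x \<in> N" by simp
  qed
  have A2: "tv 1 \<in> N"
  proof -
    have t2: "tv 2 \<in> N" using A1 by simp
    obtain n where n: "n \<in> N" "phi n = transpose 2 1" using trN[of 2 1] by auto
    let ?g = "\<lambda>c::nat. if c = 2 then 1 else if c = 8 then 2 else (0::nat)"
    let ?f = "\<lambda>c. 2 * ?g c + ?g (transpose 2 1 c)"
    have gG2: "model id ?g \<in> G2_set" using t2 NG unfolding tv_def by blast
    have BN: "model id ?f \<in> N" using comm[OF n(1) gG2] unfolding n(2) inv_transpose_eq .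
    have "model id ?f \<circ> tv 2 \<in> N" by (rule Ncomp[OF BN t2])
    moreover have "model id ?f \<circ> tv 2 = tv 1"
      unfolding model_comp_id tv_def
      apply (rule model_cong)
       apply (intro ballI, elim c8_cases[elim_format] disjE; simp add: transpose_def)
      apply simp
      done
    ultimately show "tv 1 \<in> N" by simp
  qed
  have tvN: "\<And>x. x \<in> {1..7} \<Longrightarrow> tv x \<in> N"
  proof -
    fix x :: nat assume "x \<in> {1..7}"
    then have "x = 1 \<or> x \<in> {2..7}" by auto
    then show "tv x \<in> N" using A1 A2 by blast
  qed

  define tj where "tj x j = model id (\<lambda>c. if c = x then j else if c = 8 then 2 * j else 0)"
    for x j :: nat
  have tjN: "\<And>x j. x \<in> {1..7} \<Longrightarrow> tj x j \<in> N"
  proof -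
    fix x j :: nat assume x: "x \<in> {1..7}"
    show "tj x j \<in> N"
    proof (induction j)
      case 0
      have "tj x 0 = model id (\<lambda>c. 0)" unfolding tj_def by (rule model_cong) auto
      then have "tj x 0 = id" using model_id0 by (simp only:)
      with Nid show ?case by (simp only:)
    next
      case (Suc j)
      have "tv x \<circ> tj x j \<in> N" by (rule Ncomp[OF tvN[OF x] Suc.IH])
      moreover have "tv x \<circ> tj x j = tj x (Suc j)"
        unfolding tv_def tj_def model_comp_id by (rule model_cong) (use x in auto)
      ultimately show ?case by simp
    qed
  qed

  have Kin: "\<And>e. (\<Sum>c\<in>{1..8}. e c) mod 3 = 0 \<Longrightarrow> model id e \<in> N"
  proof -
    fix e :: "nat \<Rightarrow> nat" assume es: "(\<Sum>c\<in>{1..8}. e c) mod 3 = 0"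
    have "tj 1 (e 1) \<circ> tj 2 (e 2) \<circ> tj 3 (e 3) \<circ> tj 4 (e 4) \<circ> tj 5 (e 5) \<circ> tj 6 (e 6) \<circ> tj 7 (e 7) \<in> N"
      by (intro Ncomp tjN) auto
    moreover have "tj 1 (e 1) \<circ> tj 2 (e 2) \<circ> tj 3 (e 3) \<circ> tj 4 (e 4) \<circ> tj 5 (e 5) \<circ> tj 6 (e 6) \<circ> tj 7 (e 7)
        = model id e"
    proof -
      have s8: "(e 1 + e 2 + e 3 + e 4 + e 5 + e 6 + e 7 + e 8) mod 3 = 0"
        using es sum8[of e] by simp
      show ?thesis unfolding tj_def model_comp_id
      proof (rule model_cong, intro ballI)
        fix c :: nat assume "c \<in> {1..8}"
        then consider "c = 1 \<or> c = 2 \<or> c = 3 \<or> c = 4 \<or> c = 5 \<or> c = 6 \<or> c = 7" | "c = 8" by fastforce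
        then show "((if c = 7 then e 7 else if c = 8 then 2 * e 7 else 0) +
               ((if c = 6 then e 6 else if c = 8 then 2 * e 6 else 0) +
                ((if c = 5 then e 5 else if c = 8 then 2 * e 5 else 0) +
                 ((if c = 4 then e 4 else if c = 8 then 2 * e 4 else 0) +
                  ((if c = 3 then e 3 else if c = 8 then 2 * e 3 else 0) +
                   ((if c = 2 then e 2 else if c = 8 then 2 * e 2 else 0) +
                    (if c = 1 then e 1 else if c = 8 then 2 * e 1 else 0))))))) mod 3 = e c mod 3"
        proof cases
          case 1 then show ?thesis by (elim disjE) simp_all
        next
          case 2
          have "(2 * (e 1 + e 2 + e 3 + e 4 + e 5 + e 6 + e 7)) mod 3 = e 8 mod 3"
            by (rule mod3_aux[OF s8])
          then show ?thesis using 2 by (simp add: distrib_left ac_simps)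
        qed
      qed simp
    qed
    ultimately show "model id e \<in> N" by simp
  qed

  have "G2_set \<subseteq> N"
  proof
    fix g assume gG: "g \<in> G2_set"
    obtain s e where gs: "g = model s e" "s permutes {1..8}" "(\<Sum>c\<in>{1..8}. e c) mod 3 = 0"
      using G2_M0[OF gG] by (rule M0E)
    have "phi g \<in> phi ` N" using phiN gs phi_model by simp
    then obtain n where nN: "n \<in> N" and pn: "phi n = phi g" by (rule imageE) simp
    have pg: "phi g = s" using gs phi_model by simp
    have nG: "n \<in> G2_set" using nN NG by blast
    obtain s' e' where ns: "n = model s' e'" "s' permutes {1..8}" using G2_M0[OF nG] by (rule M0E)
    have ss: "s' = s" using pn pg ns phi_model by simp
    obtain r f where ni: "inv\<^bsub>G2\<^esub> n = model r f" "r permutes {1..8}" "(\<Sum>c\<in>{1..8}. f c) mod 3 = 0"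
    proof -
      have "inv\<^bsub>G2\<^esub> n \<in> M0" using invG[OF nG] G2_M0 by simp
      then show ?thesis using that by (rule M0E)
    qed
    have "id = inv\<^bsub>G2\<^esub> n \<circ> n" using invG[OF nG] by simp
    also have "\<dots> = model (r \<circ> s) (\<lambda>c. e' c + f (s c))" using ni ns ss model_comp by simp
    finally have idm: "id = model (r \<circ> s) (\<lambda>c. e' c + f (s c))" .
    have "r \<circ> s = phi (model (r \<circ> s) (\<lambda>c. e' c + f (s c)))"
      using phi_model[OF permutes_compose[OF gs(2) ni(2)]] by simp
    also have "\<dots> = phi id" using idm by simp
    finally have rs: "r \<circ> s = id" using phi_id by simp
    have "inv\<^bsub>G2\<^esub> n \<circ> g = model (r \<circ> s) (\<lambda>c. e c + f (s c))" using ni gs model_comp by simp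
    also have "\<dots> = model id (\<lambda>c. e c + f (s c))" using rs by simp
    finally have kk: "inv\<^bsub>G2\<^esub> n \<circ> g = model id (\<lambda>c. e c + f (s c))" .
    have "model id (\<lambda>c. e c + f (s c)) \<in> N"
      by (rule Kin, rule sum_comp_mod[OF gs(2) ni(3) gs(3)])
    then have "n \<circ> (inv\<^bsub>G2\<^esub> n \<circ> g) \<in> N" using Ncomp nN kk by simp
    moreover have "n \<circ> (inv\<^bsub>G2\<^esub> n \<circ> g) = g" using invG[OF nG] by (simp add: o_assoc)
    ultimately show "g \<in> N" by simp
  qed
  then show ?thesis using NG cG by blast
qed
end
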